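(* For every $n \geq 2$ and every $i \in \{2,\ldots,n\}$, the number of deranged linear arrangements of $\{1,\ldots,n\}$ whose first entry is $i$ is exactly $d_{n-1}$ (and there are none with first entry $1$).
   Context: A linear arrangement of $\{1,\ldots,n\}$ is a sequence $a_1\cdots a_n$ in which each of $1,\ldots,n$ appears exactly once; it is deranged if $a_t\ne t$ for all $t$. It contains the pattern $ij$ if $a_t=i$ and $a_{t+1}=j$ for some $t$; otherwise it avoids it. $d_m$ is the number of linear arrangements of $\{1,\ldots,m\}$ avoiding all of the patterns $12, 23, \ldots, (m-1)m$. *)

theory Defs
  imports Main
begin

definition arrangements :: "nat \<Rightarrow> nat list set" where
  "arrangements n = {xs. distinct xs \<and> set xs = {1..n}}"

definition deranged :: "nat list \<Rightarrow> bool" where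
  "deranged xs \<longleftrightarrow> (\<forall>t\<in>{1..length xs}. xs ! (t - 1) \<noteq> t)"

definition contains_pattern :: "nat list \<Rightarrow> nat \<Rightarrow> nat \<Rightarrow> bool" where
  "contains_pattern xs i j \<longleftrightarrow> (\<exists>t. t + 1 < length xs \<and> xs ! t = i \<and> xs ! (t + 1) = j)"

definition d :: "nat \<Rightarrow> nat" where
  "d m = card {xs \<in> arrangements m. \<forall>k\<in>{1..<m}. \<not> contains_pattern xs k (k + 1)}"

end

theory Submission
  imports Defs "HOL-Combinatorics.Multiset_Permutations"
begin

lemma arr_perm: "arrangements m = permutations_of_set {1..m}"
  by (auto simp: arrangements_def permutations_of_set_def)

lemma card_arr: "card (arrangements m) = fact m"
  by (simp add: arr_perm)

lemma finite_arr: "finite (arrangements m)"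
  by (simp add: arr_perm)

lemma arr_len: "xs \<in> arrangements m \<Longrightarrow> length xs = m"
  unfolding arrangements_def using distinct_card by fastforce

definition ins1 :: "nat \<Rightarrow> nat list \<Rightarrow> nat \<Rightarrow> nat list" where
  "ins1 M w s = take s w @ M # drop s w"

definition ins2 :: "nat \<Rightarrow> nat list \<Rightarrow> nat \<Rightarrow> nat list" where
  "ins2 M b x = (if x = 0 then b @ [M] else b[x - 1 := M] @ [b ! (x - 1)])"

lemma ins1_arr: "w \<in> arrangements m \<Longrightarrow> s \<le> m \<Longrightarrow> ins1 (Suc m) w s \<in> arrangements (Suc m)"
proof -
  assume a: "w \<in> arrangements m" "s \<le> m"
  have "distinct w" "set w = {1..m}" using a by (auto simp: arrangements_def)
  then have "distinct (take s w @ Suc m # drop s w)"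
  proof -
    have "distinct (take s w @ drop s w)" using \<open>distinct w\<close> by simp
    moreover have "Suc m \<notin> set w" using \<open>set w = _\<close> by auto
    ultimately show ?thesis using set_take_disj_set_drop_if_distinct[OF \<open>distinct w\<close>, of s s]
      by (auto simp: distinct_append dest: in_set_takeD in_set_dropD)
  qed
  moreover have "set (take s w @ Suc m # drop s w) = {1..Suc m}"
    using \<open>set w = _\<close> by (auto simp flip: set_append[of "take s w" "drop s w", unfolded append_take_drop_id] )
  ultimately show ?thesis by (simp add: ins1_def arrangements_def)
qed

lemma ins1_inj: "inj_on (\<lambda>(w,s). ins1 (Suc m) w s) (arrangements m \<times> {0..m})"
proof (rule inj_onI, clarsimp)
  fix w s w' s'
  assume a: "w \<in> arrangements m" "s \<le> m" "w' \<in> arrangements m" "s' \<le> m"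
     and e: "ins1 (Suc m) w s = ins1 (Suc m) w' s'"
  have nw: "Suc m \<notin> set w" "Suc m \<notin> set w'" using a by (auto simp: arrangements_def)
  have l: "length w = m" "length w' = m" using a arr_len by auto
  have "removeAll (Suc m) (ins1 (Suc m) w s) = w"
    using nw unfolding ins1_def
    by (metis append_take_drop_id removeAll_append removeAll_id in_set_dropD in_set_takeD removeAll.simps(2))
  moreover have "removeAll (Suc m) (ins1 (Suc m) w' s') = w'"
    using nw unfolding ins1_def
    by (metis append_take_drop_id removeAll_append removeAll_id in_set_dropD in_set_takeD removeAll.simps(2))
  ultimately have ww: "w = w'" using e by simp
  have "ins1 (Suc m) w s ! s = Suc m" using l a by (simp add: ins1_def nth_append)
  moreover have "ins1 (Suc m) w s ! s' = Suc m" using l a e ww by (simp add: ins1_def nth_append)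
  moreover have "distinct (ins1 (Suc m) w s)" using ins1_arr a by (simp add: arrangements_def)
  moreover have "length (ins1 (Suc m) w s) = Suc m" using l a by (simp add: ins1_def)
  ultimately have "s = s'" using a by (metis le_imp_less_Suc nth_eq_iff_index_eq)
  then show "w = w' \<and> s = s'" using ww by simp
qed

lemma bij_by_card: "inj_on f A \<Longrightarrow> f ` A \<subseteq> B \<Longrightarrow> finite B \<Longrightarrow> card A = card B \<Longrightarrow> bij_betw f A B"
  by (metis bij_betw_def card_image card_subset_eq)

lemma card_prod_arr: "card (arrangements m \<times> {0..m}) = card (arrangements (Suc m))"
  by (simp add: card_arr card_cartesian_product)

lemma ins1_bij: "bij_betw (\<lambda>(w,s). ins1 (Suc m) w s) (arrangements m \<times> {0..m}) (arrangements (Suc m))"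
  by (rule bij_by_card[OF ins1_inj]) (auto simp: ins1_arr finite_arr card_prod_arr)

lemma ins2_arr: "b \<in> arrangements m \<Longrightarrow> x \<le> m \<Longrightarrow> ins2 (Suc m) b x \<in> arrangements (Suc m)"
proof -
  assume a: "b \<in> arrangements m" "x \<le> m"
  have d: "distinct b" "set b = {1..m}" using a by (auto simp: arrangements_def)
  have l: "length b = m" using a arr_len by auto
  show ?thesis
  proof (cases "x = 0")
    case True then show ?thesis using d by (auto simp: ins2_def arrangements_def)
  next
    case False
    then have xl: "x - 1 < length b" using a l by simp
    have s1: "set (b[x - 1 := Suc m]) = insert (Suc m) (set b - {b ! (x - 1)})"
      using set_update_distinct[OF d(1) xl] by simp
    have "distinct (b[x - 1 := Suc m])" using d xl by (auto simp: distinct_list_update)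
    moreover have "b ! (x - 1) \<in> set b" using xl by simp
    ultimately have "distinct (b[x - 1 := Suc m] @ [b ! (x - 1)])" using s1 d by auto
    moreover have "set (b[x - 1 := Suc m] @ [b ! (x - 1)]) = {1..Suc m}"
      using s1 d \<open>b ! (x - 1) \<in> set b\<close> by auto
    ultimately show ?thesis using False by (simp add: ins2_def arrangements_def)
  qed
qed

lemma ins2_inj: "inj_on (\<lambda>(b,x). ins2 (Suc m) b x) (arrangements m \<times> {0..m})"
proof (rule inj_onI, clarsimp)
  fix b x b' x'
  assume a: "b \<in> arrangements m" "x \<le> m" "b' \<in> arrangements m" "x' \<le> m"
     and e: "ins2 (Suc m) b x = ins2 (Suc m) b' x'"
  have nw: "Suc m \<notin> set b" "Suc m \<notin> set b'" using a by (auto simp: arrangements_def)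
  have l: "length b = m" "length b' = m" using a arr_len by auto
  have lastM: "\<And>c y. c \<in> arrangements m \<Longrightarrow> y \<le> m \<Longrightarrow> (last (ins2 (Suc m) c y) = Suc m) = (y = 0)"
  proof -
    fix c y assume "c \<in> arrangements m" "y \<le> m"
    then have "length c = m" "Suc m \<notin> set c" using arr_len by (auto simp: arrangements_def)
    moreover have "y \<noteq> 0 \<Longrightarrow> c ! (y - 1) \<in> set c" using \<open>y \<le> m\<close> \<open>length c = m\<close> by simp
    ultimately show "(last (ins2 (Suc m) c y) = Suc m) = (y = 0)"
      by (auto simp: ins2_def)
  qed
  have z: "(x = 0) = (x' = 0)" using lastM[OF a(1,2)] lastM[OF a(3,4)] e by simp
  show "b = b' \<and> x = x'"
  proof (cases "x = 0")
    case True then show ?thesis using z e by (simp add: ins2_def)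
  next
    case False
    then have x': "x' \<noteq> 0" using z by simp
    have e1: "b[x - 1 := Suc m] = b'[x' - 1 := Suc m]" and e2: "b ! (x - 1) = b' ! (x' - 1)"
      using e False x' by (simp_all add: ins2_def)
    have "b'[x' - 1 := Suc m] ! (x - 1) = Suc m" using e1[symmetric] l a False by simp
    moreover have "x - 1 \<noteq> x' - 1 \<Longrightarrow> b'[x' - 1 := Suc m] ! (x - 1) = b' ! (x - 1)" by simp
    moreover have "b' ! (x - 1) \<in> set b'" using l a False by simp
    ultimately have "x - 1 = x' - 1" using nw by metis
    then have xx: "x = x'" using False x' by simp
    have "b = (b[x - 1 := Suc m])[x - 1 := b ! (x - 1)]" by simp
    also have "\<dots> = (b'[x' - 1 := Suc m])[x' - 1 := b' ! (x' - 1)]" using e1 e2 xx by simp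
    also have "\<dots> = b'" by simp
    finally show ?thesis using xx by simp
  qed
qed

lemma ins2_bij: "bij_betw (\<lambda>(b,x). ins2 (Suc m) b x) (arrangements m \<times> {0..m}) (arrangements (Suc m))"
  by (rule bij_by_card[OF ins2_inj]) (auto simp: ins2_arr finite_arr card_prod_arr)

lemma ins1_nth: "s \<le> length w \<Longrightarrow> j \<le> length w \<Longrightarrow>
   ins1 M w s ! j = (if j < s then w ! j else if j = s then M else w ! (j - 1))"
  by (auto simp: ins1_def nth_append min_def)

lemma succ_ins1:
  assumes a: "w \<in> arrangements m" "s \<le> m" and k: "1 \<le> k" "k \<le> m"
  shows "contains_pattern (ins1 (Suc m) w s) k (k + 1) \<longleftrightarrow>
     (k < m \<and> contains_pattern w k (k + 1) \<and> k \<noteq> (if s = 0 then 0 else w ! (s - 1)))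
     \<or> (k = (if s = 0 then 0 else w ! (s - 1)) \<and> k = m)"
proof -
  have d: "distinct w" "set w = {1..m}" using a by (auto simp: arrangements_def)
  have l: "length w = m" using a arr_len by auto
  have lv: "length (ins1 (Suc m) w s) = Suc m" using l a by (simp add: ins1_def)
  have inw: "\<And>j. j < m \<Longrightarrow> w ! j \<in> {1..m}" using d l by (metis nth_mem)
  have dj: "\<And>i j. i < m \<Longrightarrow> j < m \<Longrightarrow> w ! i = w ! j \<longleftrightarrow> i = j" using d l nth_eq_iff_index_eq by metis
  define v where "v = ins1 (Suc m) w s"
  have vn: "\<And>j. j \<le> m \<Longrightarrow> v ! j = (if j < s then w ! j else if j = s then Suc m else w ! (j - 1))"
    unfolding v_def using ins1_nth l a by simp
  have cpv: "contains_pattern v k (k + 1) \<longleftrightarrow> (\<exists>t. t + 1 < Suc m \<and> v ! t = k \<and> v ! (t + 1) = k + 1)"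
    using lv unfolding v_def contains_pattern_def by simp
  have cpw: "contains_pattern w k (k + 1) \<longleftrightarrow> (\<exists>t. t + 1 < m \<and> w ! t = k \<and> w ! (t + 1) = k + 1)"
    using l unfolding contains_pattern_def by simp
  have main: "(\<exists>t. t + 1 < Suc m \<and> v ! t = k \<and> v ! (t + 1) = k + 1) \<longleftrightarrow>
     (k < m \<and> (\<exists>t. t + 1 < m \<and> w ! t = k \<and> w ! (t + 1) = k + 1) \<and> k \<noteq> (if s = 0 then 0 else w ! (s - 1)))
     \<or> (k = (if s = 0 then 0 else w ! (s - 1)) \<and> k = m)"
  proof
    assume "\<exists>t. t + 1 < Suc m \<and> v ! t = k \<and> v ! (t + 1) = k + 1"
    then obtain j where j: "j + 1 < Suc m" "v ! j = k" "v ! (j + 1) = k + 1" by blast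
    show "(k < m \<and> (\<exists>t. t + 1 < m \<and> w ! t = k \<and> w ! (t + 1) = k + 1) \<and> k \<noteq> (if s = 0 then 0 else w ! (s - 1))) \<or>
          (k = (if s = 0 then 0 else w ! (s - 1)) \<and> k = m)"
    proof (cases "j + 1 < s")
      case True
      then have "w ! j = k" "w ! (j + 1) = k + 1" using j vn by auto
      moreover have "k + 1 \<le> m" using inw[of "j+1"] True a calculation by force
      moreover have "w ! (s - 1) \<noteq> k" using dj[of "s - 1" j] True a \<open>w ! j = k\<close> by auto
      moreover have "j + 1 < m" using True a by simp
      ultimately show ?thesis using True by (intro disjI1) (auto intro!: exI[of _ j])
    next
      case False
      show ?thesis
      proof (cases "j + 1 = s")
        case True
        then have "w ! (s - 1) = k" "Suc m = k + 1" using j vn by auto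
        then show ?thesis using True by auto
      next
        case False
        with \<open>\<not> j + 1 < s\<close> have js: "s \<le> j" by simp
        show ?thesis
        proof (cases "j = s")
          case True
          then have "k = Suc m" using j vn by auto
          then show ?thesis using k by simp
        next
          case False
          then have jj: "s < j" using js by simp
          have w1: "w ! (j - 1) = k" "w ! j = k + 1" using j vn jj by auto
          have "k + 1 \<le> m" using inw[of j] j w1 by force
          moreover have "s \<noteq> 0 \<Longrightarrow> w ! (s - 1) \<noteq> k" using dj[of "s - 1" "j - 1"] jj j w1 by auto
          moreover have "j - 1 + 1 < m" "j - 1 + 1 = j" using jj j by auto
          ultimately show ?thesis using w1 k by (intro disjI1) (auto intro!: exI[of _ "j - 1"])
        qed
      qed
    qed
  next
    assume "(k < m \<and> (\<exists>t. t + 1 < m \<and> w ! t = k \<and> w ! (t + 1) = k + 1) \<and> k \<noteq> (if s = 0 then 0 else w ! (s - 1))) \<or>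
          (k = (if s = 0 then 0 else w ! (s - 1)) \<and> k = m)"
    then show "\<exists>t. t + 1 < Suc m \<and> v ! t = k \<and> v ! (t + 1) = k + 1"
    proof
      assume "k = (if s = 0 then 0 else w ! (s - 1)) \<and> k = m"
      then have s0: "s \<noteq> 0" and ws: "w ! (s - 1) = k" "k = m" using k by (auto split: if_splits)
      have "v ! (s - 1) = k" "v ! (s - 1 + 1) = k + 1" using vn s0 ws a by auto
      then show ?thesis using s0 a by (intro exI[of _ "s - 1"]) auto
    next
      assume h: "k < m \<and> (\<exists>t. t + 1 < m \<and> w ! t = k \<and> w ! (t + 1) = k + 1) \<and> k \<noteq> (if s = 0 then 0 else w ! (s - 1))"
      then obtain t where t: "t + 1 < m" "w ! t = k" "w ! (t + 1) = k + 1" by blast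
      show ?thesis
      proof (cases "t + 1 < s")
        case True
        then have "v ! t = k" "v ! (t + 1) = k + 1" using vn t by auto
        then show ?thesis using t by (intro exI[of _ t]) auto
      next
        case False
        have "t + 1 \<noteq> s" using h t by (auto split: if_splits)
        then have ts: "s \<le> t" using False by simp
        have "v ! (t + 1) = k" "v ! (t + 1 + 1) = k + 1" using vn t ts by auto
        then show ?thesis using t by (intro exI[of _ "t + 1"]) auto
      qed
    qed
  qed
  then show ?thesis using cpv cpw by (simp add: v_def)
qed

lemma F_ins2:
  assumes a: "b \<in> arrangements m" "x \<le> m" and k: "1 \<le> k" "k \<le> m"
  shows "(ins2 (Suc m) b x ! (k - 1) = k + 1) \<longleftrightarrow>
     (k < m \<and> b ! (k - 1) = k + 1 \<and> k \<noteq> x) \<or> (k = x \<and> k = m)"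
proof -
  have d: "distinct b" "set b = {1..m}" using a by (auto simp: arrangements_def)
  have l: "length b = m" using a arr_len by auto
  have "k - 1 < length b" using l k by simp
  then have inb: "b ! (k - 1) \<in> {1..m}" using d by (metis nth_mem)
  show ?thesis
  proof (cases "x = 0")
    case True
    then show ?thesis using l k inb by (auto simp: ins2_def nth_append)
  next
    case False
    have "ins2 (Suc m) b x ! (k - 1) = (if k = x then Suc m else b ! (k - 1))"
      using False l k a by (auto simp: ins2_def nth_append nth_list_update)
    then show ?thesis using inb k by auto
  qed
qed

lemma main_bij: "\<exists>f. bij_betw f (arrangements m) (arrangements m) \<and>
   (\<forall>w\<in>arrangements m. \<forall>k\<in>{1..<m}. contains_pattern w k (k + 1) \<longleftrightarrow> f w ! (k - 1) = k + 1)"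
proof (induction m)
  case 0
  have "bij_betw id (arrangements 0) (arrangements 0)" by (rule bij_betw_id)
  then have "bij_betw (\<lambda>a. a) (arrangements 0) (arrangements 0)" by (simp add: id_def)
  then show ?case by (intro exI[of _ "\<lambda>a. a"]) simp
next
  case (Suc m)
  then obtain f where fb: "bij_betw f (arrangements m) (arrangements m)"
    and fp0: "\<forall>w\<in>arrangements m. \<forall>k\<in>{1..<m}. contains_pattern w k (k + 1) \<longleftrightarrow> f w ! (k - 1) = k + 1"
    by (elim exE conjE)
  have fp: "\<And>w k. w \<in> arrangements m \<Longrightarrow> k \<in> {1..<m} \<Longrightarrow> contains_pattern w k (k + 1) \<longleftrightarrow> f w ! (k - 1) = k + 1"
    using fp0 by blast
  define A where "A = arrangements m \<times> {0..m}"
  define I1 where "I1 = (\<lambda>(w,s). ins1 (Suc m) w s)"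
  define I2 where "I2 = (\<lambda>(b,x). ins2 (Suc m) b x)"
  define X :: "nat list \<Rightarrow> nat \<Rightarrow> nat" where "X = (\<lambda>w s. if s = 0 then 0 else w ! (s - 1))"
  define h where "h = (\<lambda>(w,s). (f w, X w s))"
  have b1: "bij_betw I1 A (arrangements (Suc m))" unfolding I1_def A_def by (rule ins1_bij)
  have b2: "bij_betw I2 A (arrangements (Suc m))" unfolding I2_def A_def by (rule ins2_bij)
  have Xr: "\<And>w s. w \<in> arrangements m \<Longrightarrow> s \<le> m \<Longrightarrow> s \<noteq> 0 \<Longrightarrow> X w s \<in> {1..m}"
  proof -
    fix w s assume "w \<in> arrangements m" "s \<le> m" "s \<noteq> 0"
    then have "s - 1 < length w" "set w = {1..m}" using arr_len by (auto simp: arrangements_def)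
    then show "X w s \<in> {1..m}" using \<open>s \<noteq> 0\<close> unfolding X_def by (metis nth_mem)
  qed
  have hb: "bij_betw h A A"
  proof (rule bij_by_card)
    show "inj_on h A"
    proof (rule inj_onI, clarsimp simp: A_def h_def)
      fix w s w' s'
      assume a: "w \<in> arrangements m" "s \<le> m" "w' \<in> arrangements m" "s' \<le> m"
        and e: "f w = f w'" "X w s = X w' s'"
      have "inj_on f (arrangements m)" using fb by (simp add: bij_betw_def)
      then have ww: "w = w'" using e(1) a(1,3) by (simp add: inj_on_eq_iff)
      have z: "(s = 0) = (s' = 0)" using Xr[OF a(1,2)] Xr[OF a(3,4)] e(2) unfolding X_def by (cases "s = 0"; cases "s' = 0") auto
      show "w = w' \<and> s = s'"
      proof (cases "s = 0")
        case True then show ?thesis using z ww by simp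
      next
        case False
        then have "w ! (s - 1) = w ! (s' - 1)" using z e(2) ww by (simp add: X_def)
        moreover have "distinct w" "length w = m" using a arr_len by (auto simp: arrangements_def)
        ultimately have "s - 1 = s' - 1" using a False z by (simp add: nth_eq_iff_index_eq)
        then show ?thesis using ww False z by simp
      qed
    qed
    show "h ` A \<subseteq> A"
    proof (clarsimp simp: A_def h_def)
      fix w s assume "w \<in> arrangements m" "s \<le> m"
      then show "f w \<in> arrangements m \<and> X w s \<le> m"
        using fb Xr[of w s] by (auto simp: bij_betw_def X_def)
    qed
  qed (auto simp: A_def finite_arr)
  define g where "g = I2 \<circ> (h \<circ> inv_into A I1)"
  have gb: "bij_betw g (arrangements (Suc m)) (arrangements (Suc m))"
    unfolding g_def by (intro bij_betw_trans[OF bij_betw_trans[OF bij_betw_inv_into[OF b1] hb] b2])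
  have gp: "contains_pattern w k (k + 1) \<longleftrightarrow> g w ! (k - 1) = k + 1"
    if w: "w \<in> arrangements (Suc m)" and k: "k \<in> {1..<Suc m}" for w k
  proof -
    obtain w' s where ws: "inv_into A I1 w = (w', s)" by (cases "inv_into A I1 w") auto
    have wim: "w \<in> I1 ` A" using w b1 by (simp add: bij_betw_def)
    have wsA: "(w', s) \<in> A" using inv_into_into[OF wim] ws by simp
    have "I1 (w', s) = w" using f_inv_into_f[OF wim] ws by simp
    then have wI: "w = ins1 (Suc m) w' s" unfolding I1_def by simp
    have gw: "g w = ins2 (Suc m) (f w') (X w' s)" by (simp add: g_def ws h_def I2_def)
    have a: "w' \<in> arrangements m" "s \<le> m" using wsA by (auto simp: A_def)
    have fw: "f w' \<in> arrangements m" using fb a by (auto simp: bij_betw_def)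
    have k1: "1 \<le> k" "k \<le> m" using k by auto
    have xm: "X w' s \<le> m" using Xr[OF a] by (cases "s = 0") (auto simp: X_def)
    have "contains_pattern w k (k + 1) \<longleftrightarrow>
      (k < m \<and> contains_pattern w' k (k + 1) \<and> k \<noteq> X w' s) \<or> (k = X w' s \<and> k = m)"
      unfolding wI X_def by (rule succ_ins1[OF a k1])
    also have "\<dots> \<longleftrightarrow> (k < m \<and> f w' ! (k - 1) = k + 1 \<and> k \<noteq> X w' s) \<or> (k = X w' s \<and> k = m)"
      using fp[OF a(1), of k] k1 by auto
    also have "\<dots> \<longleftrightarrow> g w ! (k - 1) = k + 1"
      unfolding gw by (rule F_ins2[OF fw xm k1, symmetric])
    finally show ?thesis .
  qed
  show ?case by (intro exI[of _ g] conjI gb ballI gp)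
qed

lemma d_alt: "d m = card {b \<in> arrangements m. \<forall>k\<in>{1..<m}. b ! (k - 1) \<noteq> k + 1}"
proof -
  obtain f where fb: "bij_betw f (arrangements m) (arrangements m)"
    and fp0: "\<forall>w\<in>arrangements m. \<forall>k\<in>{1..<m}. contains_pattern w k (k + 1) \<longleftrightarrow> f w ! (k - 1) = k + 1"
    using main_bij[of m] by (elim exE conjE)
  have fp: "\<And>w k. w \<in> arrangements m \<Longrightarrow> k \<in> {1..<m} \<Longrightarrow> contains_pattern w k (k + 1) \<longleftrightarrow> f w ! (k - 1) = k + 1"
    using fp0 by blast
  let ?S = "{w \<in> arrangements m. \<forall>k\<in>{1..<m}. \<not> contains_pattern w k (k + 1)}"
  let ?T = "{b \<in> arrangements m. \<forall>k\<in>{1..<m}. b ! (k - 1) \<noteq> k + 1}"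
  have "f ` ?S = ?T"
  proof
    show "f ` ?S \<subseteq> ?T" using fb fp by (auto simp: bij_betw_def)
    show "?T \<subseteq> f ` ?S"
    proof
      fix b assume b: "b \<in> ?T"
      then obtain w where w: "w \<in> arrangements m" "b = f w" using fb by (auto simp: bij_betw_def)
      then have "w \<in> ?S" using b fp by auto
      then show "b \<in> f ` ?S" using w by blast
    qed
  qed
  moreover have "inj_on f ?S" using fb by (auto simp: bij_betw_def intro: inj_on_subset)
  ultimately have "card (f ` ?S) = card ?S" by (intro card_image) simp
  then show ?thesis unfolding d_def using \<open>f ` ?S = ?T\<close> by simp
qed

lemma E_eq:
  assumes m: "m \<ge> 1"
  shows "{xs \<in> arrangements (Suc m). deranged xs \<and> hd xs = Suc m}
       = (\<lambda>b. Suc m # b) ` {b \<in> arrangements m. \<forall>k\<in>{1..<m}. b ! (k - 1) \<noteq> k + 1}"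
proof -
  have der: "deranged (Suc m # b) \<longleftrightarrow> (\<forall>k\<in>{1..<m}. b ! (k - 1) \<noteq> k + 1)"
    if b: "b \<in> arrangements m" for b
  proof -
    have l: "length b = m" and sb: "set b = {1..m}" using b arr_len by (auto simp: arrangements_def)
    have bm: "b ! (m - 1) \<noteq> m + 1"
    proof -
      have "b ! (m - 1) \<in> set b" using l m by simp
      then show ?thesis using sb by auto
    qed
    have "deranged (Suc m # b) \<longleftrightarrow> (\<forall>t\<in>{1..Suc m}. (Suc m # b) ! (t - 1) \<noteq> t)"
      using l by (simp add: deranged_def)
    also have "\<dots> \<longleftrightarrow> (\<forall>t\<in>{2..Suc m}. b ! (t - 2) \<noteq> t)"
    proof
      assume h: "\<forall>t\<in>{1..Suc m}. (Suc m # b) ! (t - 1) \<noteq> t"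
      show "\<forall>t\<in>{2..Suc m}. b ! (t - 2) \<noteq> t"
      proof
        fix t assume t: "t \<in> {2..Suc m}"
        then have "t \<in> {1..Suc m}" by auto
        then have "(Suc m # b) ! (t - 1) \<noteq> t" using h by blast
        moreover have "(Suc m # b) ! (t - 1) = b ! (t - 2)" using t by (cases t) auto
        ultimately show "b ! (t - 2) \<noteq> t" by simp
      qed
    next
      assume h: "\<forall>t\<in>{2..Suc m}. b ! (t - 2) \<noteq> t"
      show "\<forall>t\<in>{1..Suc m}. (Suc m # b) ! (t - 1) \<noteq> t"
      proof
        fix t assume t: "t \<in> {1..Suc m}"
        show "(Suc m # b) ! (t - 1) \<noteq> t"
        proof (cases "t = 1")
          case True then show ?thesis using m by simp
        next
          case False
          then have "(Suc m # b) ! (t - 1) = b ! (t - 2)" "t \<in> {2..Suc m}" using t by (cases t; auto)+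
          then show ?thesis using h by auto
        qed
      qed
    qed
    also have "\<dots> \<longleftrightarrow> (\<forall>k\<in>{1..m}. b ! (k - 1) \<noteq> k + 1)"
    proof
      assume h: "\<forall>t\<in>{2..Suc m}. b ! (t - 2) \<noteq> t"
      show "\<forall>k\<in>{1..m}. b ! (k - 1) \<noteq> k + 1"
      proof
        fix k assume "k \<in> {1..m}"
        then show "b ! (k - 1) \<noteq> k + 1" using h[rule_format, of "k + 1"] by auto
      qed
    next
      assume h: "\<forall>k\<in>{1..m}. b ! (k - 1) \<noteq> k + 1"
      show "\<forall>t\<in>{2..Suc m}. b ! (t - 2) \<noteq> t"
      proof
        fix t assume t: "t \<in> {2..Suc m}"
        then have "t - 1 \<in> {1..m}" "t - 1 - 1 = t - 2" "t - 1 + 1 = t" by auto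
        then have "b ! (t - 1 - 1) \<noteq> t - 1 + 1" using h by blast
        then show "b ! (t - 2) \<noteq> t" using \<open>t - 1 - 1 = t - 2\<close> \<open>t - 1 + 1 = t\<close> by simp
      qed
    qed
    also have "\<dots> \<longleftrightarrow> (\<forall>k\<in>{1..<m}. b ! (k - 1) \<noteq> k + 1)"
    proof
      show "\<forall>k\<in>{1..m}. b ! (k - 1) \<noteq> k + 1 \<Longrightarrow> \<forall>k\<in>{1..<m}. b ! (k - 1) \<noteq> k + 1" by auto
      assume h: "\<forall>k\<in>{1..<m}. b ! (k - 1) \<noteq> k + 1"
      show "\<forall>k\<in>{1..m}. b ! (k - 1) \<noteq> k + 1"
      proof
        fix k assume k: "k \<in> {1..m}"
        show "b ! (k - 1) \<noteq> k + 1"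
        proof (cases "k = m")
          case True then show ?thesis using bm by simp
        next
          case False then show ?thesis using h k by auto
        qed
      qed
    qed
    finally show ?thesis .
  qed
  show ?thesis
  proof
    show "{xs \<in> arrangements (Suc m). deranged xs \<and> hd xs = Suc m} \<subseteq> (\<lambda>b. Suc m # b) ` {b \<in> arrangements m. \<forall>k\<in>{1..<m}. b ! (k - 1) \<noteq> k + 1}"
    proof clarify
      fix xs assume xs: "xs \<in> arrangements (Suc m)" "deranged xs" "hd xs = Suc m"
      then have "xs \<noteq> []" by (auto simp: arrangements_def)
      then have xe: "xs = Suc m # tl xs" using xs by (cases xs) auto
      have "distinct (Suc m # tl xs)" "set (Suc m # tl xs) = {1..Suc m}" using xs xe by (auto simp: arrangements_def)
      then have "set (tl xs) = {1..Suc m} - {Suc m}" "distinct (tl xs)" by auto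
      moreover have "{1..Suc m} - {Suc m} = {1..m}" by auto
      ultimately have "tl xs \<in> arrangements m" unfolding arrangements_def by simp
      show "xs \<in> (\<lambda>b. Suc m # b) ` {b \<in> arrangements m. \<forall>k\<in>{1..<m}. b ! (k - 1) \<noteq> k + 1}"
      proof (rule image_eqI)
        show "xs = Suc m # tl xs" by (rule xe)
        have "deranged (Suc m # tl xs)" using xs xe by simp
        then show "tl xs \<in> {b \<in> arrangements m. \<forall>k\<in>{1..<m}. b ! (k - 1) \<noteq> k + 1}"
          using der[OF \<open>tl xs \<in> arrangements m\<close>] \<open>tl xs \<in> arrangements m\<close> by simp
      qed
    qed
    show "(\<lambda>b. Suc m # b) ` {b \<in> arrangements m. \<forall>k\<in>{1..<m}. b ! (k - 1) \<noteq> k + 1} \<subseteq> {xs \<in> arrangements (Suc m). deranged xs \<and> hd xs = Suc m}"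
    proof clarify
      fix b assume b: "b \<in> arrangements m" "\<forall>k\<in>{1..<m}. b ! (k - 1) \<noteq> k + 1"
      have "Suc m # b \<in> arrangements (Suc m)" using b by (auto simp: arrangements_def)
      then show "Suc m # b \<in> arrangements (Suc m) \<and> deranged (Suc m # b) \<and> hd (Suc m # b) = Suc m"
        using der b by simp
    qed
  qed
qed

lemma card_E:
  assumes m: "m \<ge> 1"
  shows "card {xs \<in> arrangements (Suc m). deranged xs \<and> hd xs = Suc m} = d m"
proof -
  have "inj_on (\<lambda>b. Suc m # b) {b \<in> arrangements m. \<forall>k\<in>{1..<m}. b ! (k - 1) \<noteq> k + 1}"
    by (rule inj_onI) simp
  then have "card ((\<lambda>b. Suc m # b) ` {b \<in> arrangements m. \<forall>k\<in>{1..<m}. b ! (k - 1) \<noteq> k + 1})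
     = card {b \<in> arrangements m. \<forall>k\<in>{1..<m}. b ! (k - 1) \<noteq> k + 1}" by (rule card_image)
  then show ?thesis by (simp only: E_eq[OF m] d_alt[of m])
qed

definition tau :: "nat \<Rightarrow> nat \<Rightarrow> nat \<Rightarrow> nat" where
  "tau i n x = (if x = i then n else if x = n then i else x)"

definition cj :: "nat \<Rightarrow> nat \<Rightarrow> nat list \<Rightarrow> nat list" where
  "cj i n xs = map (\<lambda>t. tau i n (xs ! (tau i n t - 1))) [1..<n+1]"

lemma tau_tau[simp]: "tau i n (tau i n x) = x"
  by (simp add: tau_def)

lemma tau_in: "i \<in> {1..n} \<Longrightarrow> x \<in> {1..n} \<Longrightarrow> tau i n x \<in> {1..n}"
  by (auto simp: tau_def)

lemma cj_len[simp]: "length (cj i n xs) = n"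
  by (simp add: cj_def)

lemma cj_nth: "t < n \<Longrightarrow> cj i n xs ! t = tau i n (xs ! (tau i n (t + 1) - 1))"
  unfolding cj_def by (simp del: upt_Suc add: add.commute)

lemma cj_arr:
  assumes i: "i \<in> {1..n}" and xs: "xs \<in> arrangements n"
  shows "cj i n xs \<in> arrangements n"
proof -
  have l: "length xs = n" and d: "distinct xs" and sx: "set xs = {1..n}"
    using xs arr_len by (auto simp: arrangements_def)
  have idx: "\<And>t. t < n \<Longrightarrow> tau i n (t + 1) - 1 < n \<and> tau i n (t + 1) \<ge> 1"
  proof -
    fix t assume "t < n"
    then have "tau i n (t + 1) \<in> {1..n}" using tau_in[OF i, of "t + 1"] by auto
    then show "tau i n (t + 1) - 1 < n \<and> tau i n (t + 1) \<ge> 1" by auto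
  qed
  have dc: "distinct (cj i n xs)"
  proof (subst distinct_conv_nth, intro allI impI)
    fix a b assume ab: "a < length (cj i n xs)" "b < length (cj i n xs)" "a \<noteq> b"
    show "cj i n xs ! a \<noteq> cj i n xs ! b"
    proof
      assume "cj i n xs ! a = cj i n xs ! b"
      then have "tau i n (xs ! (tau i n (a + 1) - 1)) = tau i n (xs ! (tau i n (b + 1) - 1))"
        using ab by (simp add: cj_nth)
      then have "tau i n (tau i n (xs ! (tau i n (a + 1) - 1))) = tau i n (tau i n (xs ! (tau i n (b + 1) - 1)))"
        by simp
      then have "xs ! (tau i n (a + 1) - 1) = xs ! (tau i n (b + 1) - 1)" by simp
      then have "tau i n (a + 1) - 1 = tau i n (b + 1) - 1"
        using idx[of a] idx[of b] ab d l by (simp add: nth_eq_iff_index_eq)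
      moreover have "1 \<le> tau i n (a + 1)" "1 \<le> tau i n (b + 1)" using idx[of a] idx[of b] ab by auto
      ultimately have "tau i n (a + 1) = tau i n (b + 1)" by linarith
      then have "tau i n (tau i n (a + 1)) = tau i n (tau i n (b + 1))" by simp
      then show False using ab by simp
    qed
  qed
  have ss: "set (cj i n xs) \<subseteq> {1..n}"
  proof
    fix y assume "y \<in> set (cj i n xs)"
    then obtain t where t: "t < n" "y = cj i n xs ! t" by (auto simp: in_set_conv_nth)
    then have "xs ! (tau i n (t + 1) - 1) \<in> {1..n}" using idx[of t] l sx by (metis nth_mem)
    then show "y \<in> {1..n}" using t tau_in[OF i] by (simp add: cj_nth)
  qed
  have "card (set (cj i n xs)) = n" using dc distinct_card by fastforce
  then have "set (cj i n xs) = {1..n}" using ss by (intro card_subset_eq) auto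
  then show ?thesis using dc by (simp add: arrangements_def)
qed

lemma cj_cj:
  assumes i: "i \<in> {1..n}" and xs: "xs \<in> arrangements n"
  shows "cj i n (cj i n xs) = xs"
proof (rule nth_equalityI)
  have l: "length xs = n" using xs arr_len by auto
  show "length (cj i n (cj i n xs)) = length xs" using l by simp
  fix t assume t: "t < length (cj i n (cj i n xs))"
  then have tn: "t < n" by simp
  have "tau i n (t + 1) \<in> {1..n}" using tau_in[OF i, of "t + 1"] tn by auto
  then have q: "tau i n (t + 1) - 1 < n" "tau i n (t + 1) - 1 + 1 = tau i n (t + 1)" by auto
  show "cj i n (cj i n xs) ! t = xs ! t"
    using tn q by (simp add: cj_nth)
qed

lemma cj_der:
  assumes i: "i \<in> {1..n}" and xs: "xs \<in> arrangements n"
  shows "deranged (cj i n xs) \<longleftrightarrow> deranged xs"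
proof -
  have l: "length xs = n" using xs arr_len by auto
  have e: "\<And>t. t \<in> {1..n} \<Longrightarrow> (cj i n xs ! (t - 1) \<noteq> t) \<longleftrightarrow> (xs ! (tau i n t - 1) \<noteq> tau i n t)"
  proof -
    fix t assume t: "t \<in> {1..n}"
    then have "t - 1 < n" "t - 1 + 1 = t" by auto
    then have "cj i n xs ! (t - 1) = tau i n (xs ! (tau i n t - 1))" using cj_nth[of "t - 1" n i xs] by simp
    moreover have "(tau i n a \<noteq> t) \<longleftrightarrow> (a \<noteq> tau i n t)" for a by (auto simp: tau_def)
    ultimately show "(cj i n xs ! (t - 1) \<noteq> t) \<longleftrightarrow> (xs ! (tau i n t - 1) \<noteq> tau i n t)" by simp
  qed
  show ?thesis
  proof
    assume h: "deranged (cj i n xs)"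
    show "deranged xs" unfolding deranged_def l
    proof
      fix t assume t: "t \<in> {1..n}"
      then have "tau i n t \<in> {1..n}" using tau_in[OF i] by simp
      then have "cj i n xs ! (tau i n t - 1) \<noteq> tau i n t" using h by (simp add: deranged_def)
      then show "xs ! (t - 1) \<noteq> t" using e[OF \<open>tau i n t \<in> {1..n}\<close>] by simp
    qed
  next
    assume h: "deranged xs"
    show "deranged (cj i n xs)" unfolding deranged_def cj_len
    proof
      fix t assume t: "t \<in> {1..n}"
      then have "tau i n t \<in> {1..n}" using tau_in[OF i] by simp
      then have "xs ! (tau i n t - 1) \<noteq> tau i n t" using h l by (simp add: deranged_def)
      then show "cj i n xs ! (t - 1) \<noteq> t" using e[OF t] by simp
    qed
  qed
qed

lemma cj_hd:
  assumes i: "i \<in> {2..n}" and xs: "xs \<in> arrangements n"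
  shows "hd (cj i n xs) = tau i n (hd xs)"
proof -
  have l: "length xs = n" using xs arr_len by auto
  have n: "0 < n" using i by auto
  have "tau i n 1 = 1" using i by (auto simp: tau_def)
  then have "cj i n xs ! 0 = tau i n (xs ! 0)" using cj_nth[OF n] by simp
  moreover have "length (cj i n xs) = n" by simp
  then have "cj i n xs \<noteq> []" using n by (metis length_0_conv less_irrefl)
  moreover have "xs \<noteq> []" using n l by auto
  ultimately show ?thesis by (simp add: hd_conv_nth)
qed

lemma sym_count:
  assumes i: "i \<in> {2..n}"
  shows "card {xs \<in> arrangements n. deranged xs \<and> hd xs = i} = card {xs \<in> arrangements n. deranged xs \<and> hd xs = n}"
proof -
  have i1: "i \<in> {1..n}" using i by auto
  let ?A = "{xs \<in> arrangements n. deranged xs \<and> hd xs = i}"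
  let ?B = "{xs \<in> arrangements n. deranged xs \<and> hd xs = n}"
  have tin: "tau i n i = n" "tau i n n = i" by (auto simp: tau_def)
  have AB: "cj i n ` ?A \<subseteq> ?B" using cj_arr[OF i1] cj_der[OF i1] cj_hd[OF i] tin by auto
  have BA: "cj i n ` ?B \<subseteq> ?A" using cj_arr[OF i1] cj_der[OF i1] cj_hd[OF i] tin by auto
  have injA: "inj_on (cj i n) ?A" by (rule inj_onI) (metis (no_types, lifting) cj_cj[OF i1] mem_Collect_eq)
  have injB: "inj_on (cj i n) ?B" by (rule inj_onI) (metis (no_types, lifting) cj_cj[OF i1] mem_Collect_eq)
  have fA: "finite ?B" "finite ?A" using finite_arr by auto
  have "card ?A \<le> card ?B" using card_inj_on_le[OF injA AB fA(1)] .
  moreover have "card ?B \<le> card ?A" using card_inj_on_le[OF injB BA fA(2)] .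
  ultimately show ?thesis by simp
qed

theorem corollary4p6:
  fixes n :: nat
  assumes "n \<ge> 2"
  shows "(\<forall>i\<in>{2..n}. card {xs \<in> arrangements n. deranged xs \<and> hd xs = i} = d (n - 1))
       \<and> {xs \<in> arrangements n. deranged xs \<and> hd xs = 1} = {}"
proof
  obtain m where nm: "n = Suc m" and m: "m \<ge> 1" using assms by (cases n) auto
  show "\<forall>i\<in>{2..n}. card {xs \<in> arrangements n. deranged xs \<and> hd xs = i} = d (n - 1)"
  proof
    fix i assume i: "i \<in> {2..n}"
    show "card {xs \<in> arrangements n. deranged xs \<and> hd xs = i} = d (n - 1)"
      using sym_count[OF i] card_E[OF m] nm by simp
  qed
  show "{xs \<in> arrangements n. deranged xs \<and> hd xs = 1} = {}"
  proof (rule ccontr)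
    assume "{xs \<in> arrangements n. deranged xs \<and> hd xs = 1} \<noteq> {}"
    then obtain xs where xs: "xs \<in> arrangements n" "deranged xs" "hd xs = 1" by auto
    have "length xs = n" using xs arr_len by auto
    then have "xs \<noteq> []" "1 \<in> {1..length xs}" using assms by auto
    then have "xs ! 0 \<noteq> 1" using xs(2) unfolding deranged_def by fastforce
    then show False using xs(3) \<open>xs \<noteq> []\<close> by (simp add: hd_conv_nth)
  qed
qed

end
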